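(* For $0<c<1$ let $d_c=\sup_{x\in(0,1)}\frac{\ln(1-cx^2)}{\ln(1-x)}$ and let $x_c\in(0,1)$ be the point where this supremum is attained. Then $$x_c=\frac{1+\sqrt{1-\frac{d_c}{c}(2-d_c)}}{2-d_c}.$$ Moreover, the function $\psi(c)=d_c/c$ is increasing on $(0,1)$ and $\lim_{c\to0^+}\psi(c)=m_0(2):=\sup_{x\in(0,1)}\frac{x^2}{-\ln(1-x)}$. *)

theory Defs
  imports Complex_Main
begin

definition ratio_fn :: "real \<Rightarrow> real \<Rightarrow> real" where
  "ratio_fn c x = ln (1 - c * x\<^sup>2) / ln (1 - x)"

definition d_const :: "real \<Rightarrow> real" where
  "d_const c = (SUP x\<in>{0<..<1}. ratio_fn c x)"

definition psi :: "real \<Rightarrow> real" where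
  "psi c = d_const c / c"

definition m0_2 :: real where
  "m0_2 = (SUP x\<in>{0<..<(1::real)}. x\<^sup>2 / (- ln (1 - x)))"

end

theory Submission
  imports Defs
begin

lemma mln_lower: "0 < t \<Longrightarrow> t < 1 \<Longrightarrow> t \<le> - ln (1 - t)" for t::real
  using ln_le_minus_one[of "1-t"] by simp

lemma mln_upper_strict: "0 < t \<Longrightarrow> t < 1 \<Longrightarrow> - ln (1 - t) < t / (1 - t)" for t::real
proof -
  assume a: "0 < t" "t < 1"
  have "ln (1 + t/(1-t)) < t/(1-t)" using a by (intro ln_add_one_self_less_self) simp
  moreover have "1 + t/(1-t) = inverse (1-t)" using a by (simp add: field_simps)
  ultimately show ?thesis using a by (simp add: ln_inverse)
qed

lemma mln_upper: "0 \<le> t \<Longrightarrow> t < 1 \<Longrightarrow> - ln (1 - t) \<le> t / (1 - t)" for t::real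
  using mln_upper_strict[of t] by (cases "t = 0") auto

lemma phi_strict:
  fixes s t :: real assumes "0 < s" "s < t" "t < 1"
  shows "- ln (1 - s) / s < - ln (1 - t) / t"
proof -
  let ?f = "\<lambda>u::real. - ln (1 - u) / u"
  have "?f s < ?f t"
  proof (rule DERIV_pos_imp_increasing_open[OF assms(2)])
    fix x assume x: "s < x" "x < t"
    then have x0: "0 < x" "x < 1" using assms by auto
    have "DERIV ?f x :> ((1/(1-x)) * x - (- ln (1 - x))) / x^2"
      using x0 by (auto intro!: derivative_eq_intros simp: power2_eq_square field_simps)
    moreover have "((1/(1-x)) * x - (- ln (1 - x))) / x^2 > 0"
      using mln_upper_strict[OF x0] x0 by (simp add: field_simps)
    ultimately show "\<exists>y. DERIV ?f x :> y \<and> y > 0" by blast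
  next
    show "continuous_on {s..t} ?f" using assms
      by (intro continuous_intros) auto
  qed
  then show ?thesis by simp
qed

lemma f_bounds:
  fixes c x :: real
  assumes c: "0 < c" "c < 1" and x: "0 < x" "x < 1"
  shows "0 < ratio_fn c x" "ratio_fn c x < 1" "ratio_fn c x \<le> c*x/(1-c)"
    "ratio_fn c x \<le> - ln (1 - c) / (- ln (1 - x))"
    "x^2 / (- ln (1 - x)) \<le> ratio_fn c x / c"
    "ratio_fn c x / c \<le> x^2 / (- ln (1 - x)) / (1 - c)"
proof -
  have cx: "0 < c*x^2" "c*x^2 < x" "c * x^2 \<le> c"
  proof -
    show "0 < c*x^2" using c x by simp
    have "x^2 < x" using x by (simp add: power2_eq_square)
    moreover have "c*x^2 \<le> x^2" using c by (simp add: mult_left_le_one_le)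
    ultimately show "c*x^2 < x" by simp
    have "x^2 \<le> 1" using x by (simp add: power_le_one)
    then show "c*x^2 \<le> c" using c by (simp add: mult_left_le)
  qed
  define A where "A = - ln (1 - c*x^2)"
  define B where "B = - ln (1 - x)"
  have r: "ratio_fn c x = A / B" unfolding ratio_fn_def A_def B_def by simp
  have A1: "c*x^2 \<le> A" unfolding A_def using mln_lower[of "c*x^2"] cx c by simp
  have A2: "A \<le> c*x^2/(1-c*x^2)" unfolding A_def using mln_upper[of "c*x^2"] cx c by simp
  have "c*x^2/(1-c*x^2) \<le> c*x^2/(1-c)" using cx c x by (intro divide_left_mono) (auto intro!: mult_pos_pos)
  with A2 have A3: "A \<le> c*x^2/(1-c)" by simp
  have B1: "x \<le> B" unfolding B_def using mln_lower[of x] x by simp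
  have AB: "A < B" unfolding A_def B_def using cx x by simp
  have A4: "A \<le> - ln (1 - c)" unfolding A_def using cx c x by (subst neg_le_iff_le, subst ln_le_cancel_iff) auto
  have Apos: "0 < A" using A1 cx by linarith
  have Bpos: "0 < B" using B1 x by linarith
  show "0 < ratio_fn c x" using r Apos Bpos by simp
  show "ratio_fn c x < 1" using r AB Bpos by simp
  have "A / B \<le> (c*x^2/(1-c)) / x" using A3 B1 Apos x by (intro frac_le) auto
  also have "\<dots> = c*x/(1-c)" using x by (simp add: power2_eq_square)
  finally show "ratio_fn c x \<le> c*x/(1-c)" using r by simp
  have "A / B \<le> - ln (1 - c) / B" using A4 Bpos by (intro divide_right_mono) auto
  then show "ratio_fn c x \<le> - ln (1 - c) / (- ln (1 - x))" using r by (simp add: B_def)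
  show "x^2 / (- ln (1 - x)) \<le> ratio_fn c x / c" unfolding r using A1 Bpos c
    by (simp add: B_def[symmetric] field_simps)
  have "A / B / c \<le> (c*x^2/(1-c)) / B / c" using A3 Bpos c by (intro divide_right_mono) auto
  also have "\<dots> = x^2/B/(1-c)" using c Bpos by (simp add: field_simps)
  finally show "ratio_fn c x / c \<le> x^2 / (- ln (1 - x)) / (1 - c)" unfolding r B_def .
qed

lemma f_cont:
  fixes c :: real assumes c: "0 < c" "c < 1" and S: "S \<subseteq> {0<..<1}"
  shows "continuous_on S (ratio_fn c)"
proof -
  have h: "0 < 1 - c*x^2 \<and> 0 < 1 - x \<and> ln (1-x) \<noteq> 0" if "x \<in> S" for x
  proof -
    have x: "0 < x" "x < 1" using S that by auto
    have "x^2 \<le> 1" using x by (simp add: power_le_one)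
    then have "c * x^2 \<le> c" using c by (intro mult_left_le) auto
    then have "c*x^2 < 1" using c by linarith
    then show ?thesis using x by simp
  qed
  show ?thesis unfolding ratio_fn_def using h by (auto intro!: continuous_intros) (metis less_irrefl)+
qed

lemma maximizer:
  fixes c :: real assumes c: "0 < c" "c < 1"
  shows "\<exists>x\<in>{0<..<1}. \<forall>y\<in>{0<..<1}. ratio_fn c y \<le> ratio_fn c x"
proof -
  define a where "a = ratio_fn c (1/2)"
  have a: "0 < a" unfolding a_def using f_bounds(1)[OF c, of "1/2"] by simp
  define L where "L = - ln (1 - c)"
  have L: "0 < L" unfolding L_def using c by simp
  define lo where "lo = min (1/2) (a*(1-c)/(2*c))"
  define hi where "hi = max (1/2) (1 - exp (-2*L/a))"
  have lo: "0 < lo" "lo \<le> 1/2" unfolding lo_def using a c by auto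
  have hi: "hi < 1" "1/2 \<le> hi" unfolding hi_def by auto
  have small: "ratio_fn c y < a" if y: "0 < y" "y < 1" "y < lo \<or> hi < y" for y
  proof (cases "y < lo")
    case True
    have "ratio_fn c y \<le> c*y/(1-c)" using f_bounds(3)[OF c y(1,2)] .
    also have "\<dots> < c*lo/(1-c)" using True c by (simp add: divide_strict_right_mono)
    also have "\<dots> \<le> c*(a*(1-c)/(2*c))/(1-c)" unfolding lo_def using c
      by (intro divide_right_mono mult_left_mono) auto
    also have "\<dots> = a/2" using c by (simp add: field_simps)
    finally show ?thesis using a by simp
  next
    case False
    then have "1 - exp (-2*L/a) < y" using y hi_def by auto
    then have "1 - y < exp (-2*L/a)" by simp
    then have "ln (1 - y) < ln (exp (-2*L/a))" using y by (subst ln_less_cancel_iff) auto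
    then have "ln (1 - y) < -2*L/a" by simp
    then have B: "2*L/a < - ln (1 - y)" by simp
    have Bp: "0 < 2*L/a" using L a by simp
    have "ratio_fn c y \<le> L / (- ln (1 - y))" using f_bounds(4)[OF c y(1,2)] L_def by simp
    also have "\<dots> < L / (2*L/a)" using B Bp L by (intro divide_strict_left_mono mult_pos_pos) auto
    also have "\<dots> = a/2" using L a by (simp add: field_simps)
    finally show ?thesis using a by simp
  qed
  have sub: "{lo..hi} \<subseteq> {0<..<1}" using lo hi by auto
  obtain x where x: "x \<in> {lo..hi}" and mx: "\<forall>y\<in>{lo..hi}. ratio_fn c y \<le> ratio_fn c x"
    using continuous_attains_sup[OF compact_Icc _ f_cont[OF c sub]] lo hi by auto
  have ha: "a \<le> ratio_fn c x" unfolding a_def using mx lo hi by auto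
  show ?thesis
  proof (intro bexI ballI)
    fix y :: real assume y: "y \<in> {0<..<1}"
    show "ratio_fn c y \<le> ratio_fn c x"
    proof (cases "y \<in> {lo..hi}")
      case True then show ?thesis using mx by auto
    next
      case False then have "ratio_fn c y < a" using small y by auto
      then show ?thesis using ha by simp
    qed
  qed (use x sub in auto)
qed

lemma critical:
  fixes c x :: real
  assumes c: "0 < c" "c < 1" and x: "0 < x" "x < 1"
    and mx: "\<forall>y\<in>{0<..<1}. ratio_fn c y \<le> ratio_fn c x"
  shows "x = (1 + sqrt (1 - ratio_fn c x / c * (2 - ratio_fn c x))) / (2 - ratio_fn c x)"
proof -
  define d where "d = ratio_fn c x"
  have d1: "d < 1" unfolding d_def using f_bounds(2)[OF c x] .
  define g where "g = (\<lambda>y. ln (1 - c*y^2) - d * ln (1 - y))"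
  define h where "h = (\<lambda>y. c*(2-d)*y^2 - 2*c*y + d)"
  have cy: "c*y^2 < 1" if "0 < y" "y < 1" for y
  proof -
    have "y^2 \<le> 1" using that by (simp add: power_le_one)
    then have "c * y^2 \<le> c" using c by (intro mult_left_le) auto
    then show ?thesis using c by linarith
  qed
  have gnn: "0 \<le> g y" if y: "0 < y" "y < 1" for y
  proof -
    have "ratio_fn c y \<le> d" using mx y d_def by auto
    then have "ln (1 - c*y^2) / ln (1 - y) \<le> d" unfolding ratio_fn_def .
    moreover have "ln (1 - y) < 0" using y by simp
    ultimately have "d * ln (1 - y) \<le> ln (1 - c*y^2)" by (simp add: neg_divide_le_eq)
    then show ?thesis unfolding g_def by simp
  qed
  have gx: "g x = 0"
  proof -
    have "ln (1 - x) < 0" using x by simp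
    then show ?thesis unfolding g_def d_def ratio_fn_def by simp
  qed
  have dg: "DERIV g y :> h y / ((1 - c*y^2) * (1 - y))" if y: "0 < y" "y < 1" for y
  proof -
    have p1: "0 < 1 - c*y^2" using cy[OF y] by simp
    have p2: "0 < 1 - y" using y by simp
    have "DERIV g y :> (- (c * (2 * y)) / (1 - c*y^2) - d * (- 1 / (1 - y)))"
      unfolding g_def using p1 p2 by (auto intro!: derivative_eq_intros)
    moreover have "(- (c * (2 * y)) / (1 - c*y^2) - d * (- 1 / (1 - y))) = h y / ((1 - c*y^2) * (1 - y))"
      unfolding h_def using p1 p2 by (simp add: field_simps power2_eq_square)
    ultimately show ?thesis by simp
  qed
  have hx: "h x = 0"
  proof -
    have "h x / ((1 - c*x^2) * (1 - x)) = 0"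
    proof (rule DERIV_local_min[OF dg[OF x], of "min x (1 - x)"])
      show "0 < min x (1 - x)" using x by simp
      show "\<forall>y. \<bar>x - y\<bar> < min x (1 - x) \<longrightarrow> g x \<le> g y"
        using gnn gx by (auto simp: abs_if split: if_splits)
    qed
    moreover have "0 < (1 - c*x^2) * (1 - x)" using cy[OF x] x by simp
    ultimately show ?thesis by (metis divide_eq_0_iff less_irrefl)
  qed
  have big: "1 \<le> (2 - d) * x"
  proof (rule ccontr)
    assume "\<not> 1 \<le> (2 - d) * x"
    then have lt: "(2 - d) * x < 1" by simp
    define v where "v = min 1 (1/(2-d))"
    have xv: "x < v" unfolding v_def using lt x d1 by (simp add: field_simps)
    define y where "y = (x + v) / 2"
    have y: "x < y" "y < v" using xv unfolding y_def by auto
    have y1: "y < 1" using y v_def by auto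
    obtain z where z: "x < z" "z < y" and eq: "g y - g x = (y - x) * (h z / ((1 - c*z^2) * (1 - z)))"
      using MVT2[of x y g "\<lambda>z. h z / ((1 - c*z^2) * (1 - z))"] y y1 x dg by force
    have "(2 - d) * (z + x) < 2"
    proof -
      have "z + x < 2 * v" using z y by simp
      also have "2 * v \<le> 2/(2-d)" unfolding v_def by simp
      finally show ?thesis using d1 by (simp add: field_simps)
    qed
    then have "h z - h x < 0"
    proof -
      assume a: "(2 - d) * (z + x) < 2"
      have "h z - h x = c * (z - x) * ((2 - d) * (z + x) - 2)"
        unfolding h_def by (simp add: algebra_simps power2_eq_square)
      moreover have "c * (z - x) > 0" using c z by simp
      ultimately show ?thesis using a by (simp add: mult_pos_neg)
    qed
    then have hz: "h z < 0" using hx by simp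
    have "0 < (1 - c*z^2) * (1 - z)" using cy[of z] z y y1 x by simp
    then have "h z / ((1 - c*z^2) * (1 - z)) < 0" using hz by (simp add: divide_neg_pos)
    then have "(y - x) * (h z / ((1 - c*z^2) * (1 - z))) < 0" using y by (intro mult_pos_neg) auto
    then have "g y < 0" using eq gx by simp
    then show False using gnn[of y] y x y1 by simp
  qed
  have sq: "((2 - d) * x - 1)^2 = 1 - d / c * (2 - d)"
  proof -
    have h0: "c*(2-d)*x^2 - 2*c*x + d = 0" using hx unfolding h_def .
    have "c * (((2 - d) * x - 1)^2) = (2-d)*(c*(2-d)*x^2 - 2*c*x + d) + c - (2-d)*d"
      by (simp add: algebra_simps power2_eq_square)
    also have "\<dots> = c - (2-d)*d" using h0 by simp
    also have "\<dots> = c * (1 - d / c * (2 - d))" using c by (simp add: field_simps)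
    finally have "c * (((2 - d) * x - 1)^2) = c * (1 - d / c * (2 - d))" .
    then show ?thesis using c by simp
  qed
  have "sqrt (1 - d / c * (2 - d)) = (2 - d) * x - 1"
    using sq big by (metis real_sqrt_abs abs_of_nonneg diff_ge_0_iff_ge)
  then have "x = (1 + sqrt (1 - d / c * (2 - d))) / (2 - d)" using d1 by (simp add: field_simps)
  then show ?thesis unfolding d_def .
qed

lemma d_max:
  fixes c :: real assumes c: "0 < c" "c < 1"
  shows "\<exists>x\<in>{0<..<1}. d_const c = ratio_fn c x \<and> (\<forall>y\<in>{0<..<1}. ratio_fn c y \<le> ratio_fn c x)"
proof -
  obtain x where x: "x \<in> {0<..<1}" and m: "\<forall>y\<in>{0<..<1}. ratio_fn c y \<le> ratio_fn c x"
    using maximizer[OF c] by blast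
  have "d_const c = ratio_fn c x" unfolding d_const_def
    by (rule cSup_eq_maximum) (use x m in auto)
  then show ?thesis using x m by blast
qed

lemma q_le_one: "0 < x \<Longrightarrow> x < 1 \<Longrightarrow> x^2 / (- ln (1 - x)) \<le> 1" for x :: real
proof -
  assume x: "0 < x" "x < 1"
  have B: "x \<le> - ln (1 - x)" using mln_lower x by simp
  have "x^2 / (- ln (1 - x)) \<le> x^2 / x" using B x by (intro divide_left_mono mult_pos_pos) auto
  also have "\<dots> \<le> 1" using x by (simp add: power2_eq_square)
  finally show ?thesis .
qed

lemma ratio_over_c_strict:
  fixes c1 c2 x :: real
  assumes "0 < c1" "c1 < c2" "c2 < 1" "0 < x" "x < 1"
  shows "ratio_fn c1 x / c1 < ratio_fn c2 x / c2"
proof -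
  have eq: "ratio_fn c x / c = (- ln (1 - c*x^2) / (c*x^2)) * (x^2 / (- ln (1 - x)))"
    if "0 < c" for c
    using that assms by (simp add: ratio_fn_def field_simps)
  have "x * x < 1 * 1" using assms by (intro mult_strict_mono) auto
  then have x2: "0 < x^2" "x^2 < 1" using assms by (auto simp: power2_eq_square)
  have "- ln (1 - c1*x^2) / (c1*x^2) < - ln (1 - c2*x^2) / (c2*x^2)"
  proof (rule phi_strict)
    show "0 < c1 * x^2" using assms x2 by simp
    show "c1 * x^2 < c2 * x^2" using assms x2 by simp
    have "c2 * x^2 \<le> x^2" using assms x2 by (intro mult_left_le_one_le) auto
    then show "c2 * x^2 < 1" using x2 by linarith
  qed
  moreover have "0 < x^2 / (- ln (1 - x))" using assms x2 by (intro divide_pos_pos) auto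
  ultimately have "(- ln (1 - c1*x^2) / (c1*x^2)) * (x^2 / (- ln (1 - x)))
      < (- ln (1 - c2*x^2) / (c2*x^2)) * (x^2 / (- ln (1 - x)))"
    by (rule mult_strict_right_mono)
  then show ?thesis using eq[of c1] eq[of c2] assms by (simp only:)
qed

lemma part1:
  "\<forall>c\<in>{0<..<(1::real)}.
            (\<exists>x\<in>{0<..<1}. ratio_fn c x = d_const c) \<and>
            (\<forall>x\<in>{0<..<1}. ratio_fn c x = d_const c \<longrightarrow>
               x = (1 + sqrt (1 - d_const c / c * (2 - d_const c))) / (2 - d_const c))"
proof (rule ballI)
  fix c :: real assume "c \<in> {0<..<1}"
  then have c: "0 < c" "c < 1" by auto
  obtain x0 where x0: "x0 \<in> {0<..<1}" "d_const c = ratio_fn c x0"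
    and m: "\<forall>y\<in>{0<..<1}. ratio_fn c y \<le> ratio_fn c x0"
    using d_max[OF c] by blast
  have A: "\<exists>x\<in>{0<..<1}. ratio_fn c x = d_const c" using x0 by auto
  have B: "\<forall>x\<in>{0<..<1}. ratio_fn c x = d_const c \<longrightarrow>
               x = (1 + sqrt (1 - d_const c / c * (2 - d_const c))) / (2 - d_const c)"
  proof (intro ballI impI)
    fix x assume x: "x \<in> {0<..<1}" and e: "ratio_fn c x = d_const c"
    have "\<forall>y\<in>{0<..<1}. ratio_fn c y \<le> ratio_fn c x" using m x0 e by simp
    from critical[OF c _ _ this] x e show "x = (1 + sqrt (1 - d_const c / c * (2 - d_const c))) / (2 - d_const c)"
      by auto
  qed
  show "(\<exists>x\<in>{0<..<1}. ratio_fn c x = d_const c) \<and>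
            (\<forall>x\<in>{0<..<1}. ratio_fn c x = d_const c \<longrightarrow>
               x = (1 + sqrt (1 - d_const c / c * (2 - d_const c))) / (2 - d_const c))"
    using A B by blast
qed

theorem mainTheorem5:
  shows "(\<forall>c\<in>{0<..<(1::real)}.
            (\<exists>x\<in>{0<..<1}. ratio_fn c x = d_const c) \<and>
            (\<forall>x\<in>{0<..<1}. ratio_fn c x = d_const c \<longrightarrow>
               x = (1 + sqrt (1 - d_const c / c * (2 - d_const c))) / (2 - d_const c)))
       \<and> strict_mono_on {0<..<1} psi
       \<and> (psi \<longlongrightarrow> m0_2) (at_right 0)"
proof (intro conjI)
  show "\<forall>c\<in>{0<..<(1::real)}. (\<exists>x\<in>{0<..<1}. ratio_fn c x = d_const c) \<and> (\<forall>x\<in>{0<..<1}. ratio_fn c x = d_const c \<longrightarrow> x = (1 + sqrt (1 - d_const c / c * (2 - d_const c))) / (2 - d_const c))"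
    by (rule part1)
next
  show "strict_mono_on {0<..<1} psi"
  proof (rule strict_mono_onI)
    fix r s :: real assume r: "r \<in> {0<..<1}" and s: "s \<in> {0<..<1}" and rs: "r < s"
    obtain x1 where x1: "x1 \<in> {0<..<1}" "d_const r = ratio_fn r x1"
      using d_max[of r] r by auto
    obtain x2 where x2: "x2 \<in> {0<..<1}" "d_const s = ratio_fn s x2"
      and m2: "\<forall>y\<in>{0<..<1}. ratio_fn s y \<le> ratio_fn s x2"
      using d_max[of s] s by auto
    have "psi r = ratio_fn r x1 / r" unfolding psi_def using x1 by simp
    also have "\<dots> < ratio_fn s x1 / s" using ratio_over_c_strict[of r s x1] r s rs x1 by auto
    also have "\<dots> \<le> ratio_fn s x2 / s" using m2 x1 s by (intro divide_right_mono) auto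
    also have "\<dots> = psi s" unfolding psi_def using x2 by simp
    finally show "psi r < psi s" .
  qed
next
  have bdd: "bdd_above ((\<lambda>x::real. x^2 / (- ln (1 - x))) ` {0<..<1})"
    using q_le_one by (intro bdd_aboveI2[of _ _ 1]) auto
  have bounds: "m0_2 \<le> psi c \<and> psi c \<le> m0_2 / (1 - c)" if c: "0 < c" "c < 1" for c :: real
  proof
    obtain x0 where x0: "x0 \<in> {0<..<1}" "d_const c = ratio_fn c x0"
      and m: "\<forall>y\<in>{0<..<1}. ratio_fn c y \<le> ratio_fn c x0"
      using d_max[OF c] by blast
    show "m0_2 \<le> psi c" unfolding m0_2_def
    proof (rule cSUP_least)
      fix x :: real assume x: "x \<in> {0<..<1}"
      have "x^2 / (- ln (1 - x)) \<le> ratio_fn c x / c" using f_bounds(5)[OF c] x by auto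
      also have "\<dots> \<le> ratio_fn c x0 / c" using m x c by (intro divide_right_mono) auto
      finally show "x^2 / (- ln (1 - x)) \<le> psi c" unfolding psi_def using x0 by simp
    qed auto
    have "psi c = ratio_fn c x0 / c" unfolding psi_def using x0 by simp
    also have "\<dots> \<le> x0^2 / (- ln (1 - x0)) / (1 - c)" using f_bounds(6)[OF c] x0 by auto
    also have "\<dots> \<le> m0_2 / (1 - c)" unfolding m0_2_def using c x0 bdd
      by (intro divide_right_mono cSUP_upper) auto
    finally show "psi c \<le> m0_2 / (1 - c)" .
  qed
  have ev: "eventually (\<lambda>c. c \<in> {0<..<(1::real)}) (at_right 0)"
    by (rule eventually_at_right_real) simp
  have lim: "((\<lambda>c::real. m0_2 / (1 - c)) \<longlongrightarrow> m0_2 / (1 - 0)) (at_right 0)"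
    by (intro tendsto_intros) auto
  show "(psi \<longlongrightarrow> m0_2) (at_right 0)"
  proof (rule tendsto_sandwich[OF _ _ tendsto_const])
    show "((\<lambda>c::real. m0_2 / (1 - c)) \<longlongrightarrow> m0_2) (at_right 0)" using lim by simp
    show "\<forall>\<^sub>F c in at_right 0. m0_2 \<le> psi c" using ev by (rule eventually_mono) (use bounds in auto)
    show "\<forall>\<^sub>F c in at_right 0. psi c \<le> m0_2 / (1 - c)" using ev by (rule eventually_mono) (use bounds in auto)
  qed
qed

end
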